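(* For every finite set $U$ in a commutative group $G$, \[ \alpha(U)\le\beta(U),\quad \alpha'(U)\le4\beta'(U),\quad \alpha''(U)\le3\beta''(U), \] \[ \beta(U)\le\alpha(U)^2,\quad \beta''(U)\le\alpha(U)^3, \] \[ \alpha''(U)\le\alpha(U)^2,\quad \beta''(U)\le\beta''(2U)\le\beta(U)^2, \] where $2U=U+U$.
   Context: With $A,B$ ranging over nonempty finite subsets of $G$: $\alpha(U)=\inf_{A\supset U,B\supset U}\frac{|A+B|}{\sqrt{|A||B|}}$; $\alpha'(U)=\inf_{A\supset U,B\supset U,|A|=|B|}\frac{|A+B|}{|A|}$; $\alpha''(U)=\inf_{A\supset U}\frac{|A+A|}{|A|}$; $\beta(U)=\inf_{A,B}\frac{|A+B+U|}{\sqrt{|A||B|}}$; $\beta'(U)=\inf_{A,B,|A|=|B|}\frac{|A+B+U|}{\sqrt{|A||B|}}$; $\beta''(U)=\inf_A\frac{|A+A+U|}{|A|}$. *)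

theory Defs
  imports Complex_Main "HOL-Library.Set_Algebras"
begin

definition alpha :: "'a::ab_group_add set \<Rightarrow> real" where
  "alpha U = Inf {real (card (A + B)) / sqrt (real (card A) * real (card B)) | A B.
     finite A \<and> finite B \<and> A \<noteq> {} \<and> B \<noteq> {} \<and> U \<subseteq> A \<and> U \<subseteq> B}"

definition alpha' :: "'a::ab_group_add set \<Rightarrow> real" where
  "alpha' U = Inf {real (card (A + B)) / real (card A) | A B.
     finite A \<and> finite B \<and> A \<noteq> {} \<and> B \<noteq> {} \<and> U \<subseteq> A \<and> U \<subseteq> B \<and> card A = card B}"

definition alpha'' :: "'a::ab_group_add set \<Rightarrow> real" where
  "alpha'' U = Inf {real (card (A + A)) / real (card A) | A.
     finite A \<and> A \<noteq> {} \<and> U \<subseteq> A}"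

definition beta :: "'a::ab_group_add set \<Rightarrow> real" where
  "beta U = Inf {real (card (A + B + U)) / sqrt (real (card A) * real (card B)) | A B.
     finite A \<and> finite B \<and> A \<noteq> {} \<and> B \<noteq> {}}"

definition beta' :: "'a::ab_group_add set \<Rightarrow> real" where
  "beta' U = Inf {real (card (A + B + U)) / sqrt (real (card A) * real (card B)) | A B.
     finite A \<and> finite B \<and> A \<noteq> {} \<and> B \<noteq> {} \<and> card A = card B}"

definition beta'' :: "'a::ab_group_add set \<Rightarrow> real" where
  "beta'' U = Inf {real (card (A + A + U)) / real (card A) | A.
     finite A \<and> A \<noteq> {}}"

end

theory Submission
  imports Defs
begin

lemma card_sumset_le_sing:
  fixes A B :: "'a::ab_group_add set"
  assumes "finite A" "finite B" "a \<in> A"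
  shows "card B \<le> card (B + A)"
proof -
  have "card B = card (B + {a})" by (simp add: card_plus_sing)
  also have "\<dots> \<le> card (B + A)"
  proof (rule card_mono)
    show "finite (B + A)" using assms by (simp add: finite_set_plus)
    show "B + {a} \<subseteq> B + A" using assms by (intro set_plus_mono2) auto
  qed
  finally show ?thesis .
qed

lemma petridis_step:
  fixes X C D :: "'a::ab_group_add set"
  assumes fX: "finite X" and fC: "finite C" and fD: "finite D"
  and min: "\<And>Z. Z \<subseteq> X \<Longrightarrow> card (X+C) * card Z \<le> card (Z+C) * card X"
  and IH: "card (X+C+D) * card X \<le> card (X+C) * card (X+D)"
  shows "card (X+C+insert d D) * card X \<le> card (X+C) * card (X+insert d D)"
proof -
  define Z where "Z = {z\<in>X. \<forall>c\<in>C. z + c + d \<in> X+C+D}"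
  define Z' where "Z' = {z\<in>X. z + d \<in> X+D}"
  have ZX: "Z \<subseteq> X" and Z'X: "Z' \<subseteq> X" by (auto simp: Z_def Z'_def)
  have Z'Z: "Z' \<subseteq> Z"
  proof
    fix z assume "z \<in> Z'"
    then have zX: "z \<in> X" and "z + d \<in> X + D" by (auto simp: Z'_def)
    then obtain x e where xe: "z + d = x + e" "x \<in> X" "e \<in> D" by (auto elim: set_plus_elim)
    have "\<forall>c\<in>C. z + c + d \<in> X+C+D"
    proof
      fix c assume "c \<in> C"
      have "z + c + d = (x + c) + e" using xe(1) by (metis add.commute add.left_commute)
      moreover have "(x + c) + e \<in> X+C+D" using xe \<open>c\<in>C\<close> by (intro set_plus_intro)
      ultimately show "z + c + d \<in> X+C+D" by (simp only:)
    qed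
    thus "z \<in> Z" using zX by (simp add: Z_def)
  qed
  have fin: "finite (X+C)" "finite (X+D)" "finite (X+C+D)" "finite (Z+C)"
    using fX fC fD ZX finite_subset by (auto intro!: finite_set_plus)
  have e1: "X+C+insert d D = (X+C+D) \<union> ((+) d) ` (X+C)"
    by (simp add: set_plus_insert)
  have e2: "((+) d) ` (Z+C) \<subseteq> X+C+D"
  proof
    fix y assume "y \<in> ((+) d) ` (Z+C)"
    then obtain z c where "y = d + (z + c)" "z \<in> Z" "c \<in> C" by (auto elim: set_plus_elim)
    thus "y \<in> X+C+D" by (auto simp: Z_def add_ac)
  qed
  have ZCX: "Z + C \<subseteq> X + C" using ZX by (intro set_plus_mono2) auto
  have c1: "card (X+C+insert d D) \<le> card (X+C+D) + (card (X+C) - card (Z+C))"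
  proof -
    have "card (X+C+insert d D) \<le> card (X+C+D) + card (((+) d) ` (X+C) - (X+C+D))"
      unfolding e1 by (metis Un_Diff_cancel card_Un_le)
    also have "card (((+) d) ` (X+C) - (X+C+D)) \<le> card (((+) d) ` (X+C) - ((+) d) ` (Z+C))"
      by (rule card_mono) (use fin e2 in auto)
    also have "((+) d) ` (X+C) - ((+) d) ` (Z+C) = ((+) d) ` (X+C - (Z+C))"
      by auto
    also have "card \<dots> = card (X+C - (Z+C))" by (rule card_image) (auto simp: inj_on_def)
    also have "\<dots> = card (X+C) - card (Z+C)" using fin ZCX by (simp add: card_Diff_subset)
    finally show ?thesis by simp
  qed
  have e3: "X + insert d D = (X+D) \<union> ((+) d) ` X" by (simp add: set_plus_insert)
  have c2: "card (X + insert d D) = card (X+D) + (card X - card Z')"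
  proof -
    have "card (X + insert d D) = card (X+D) + card (((+) d) ` X - (X+D))"
      unfolding e3 using fin fX by (metis Un_Diff_cancel card_Un_disjoint Diff_disjoint finite_Diff finite_imageI)
    also have "((+) d) ` X - (X+D) = ((+) d) ` (X - Z')"
      by (auto simp: Z'_def add.commute)
    also have "card \<dots> = card (X - Z')" by (rule card_image) (auto simp: inj_on_def)
    also have "\<dots> = card X - card Z'" using fX Z'X by (simp add: card_Diff_subset finite_subset)
    finally show ?thesis .
  qed
  have zc: "card (Z+C) \<le> card (X+C)" using fin ZCX card_mono by blast
  have zx: "card Z' \<le> card X" "card Z' \<le> card Z" using fX Z'X ZX Z'Z card_mono finite_subset by metis+
  have m: "card (X+C) * card Z \<le> card (Z+C) * card X" using min[OF ZX] .
  have m2: "card (X+C) * card Z' \<le> card (X+C) * card Z" using zx by simp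
  have "card (X+C+insert d D) * card X \<le> (card (X+C+D) + (card (X+C) - card (Z+C))) * card X"
    using c1 by simp
  also have "\<dots> \<le> card (X+C) * (card (X+D) + (card X - card Z'))"
  proof -
    have i1: "int (card (X+C+D)) * int (card X) \<le> int (card (X+C)) * int (card (X+D))"
      using IH by (metis of_nat_le_iff of_nat_mult)
    have i2: "int (card (X+C)) * int (card Z) \<le> int (card (Z+C)) * int (card X)"
      using m by (metis of_nat_le_iff of_nat_mult)
    have i3: "int (card (X+C)) * int (card Z') \<le> int (card (X+C)) * int (card Z)"
      using m2 by (metis of_nat_le_iff of_nat_mult)
    have "int ((card (X+C+D) + (card (X+C) - card (Z+C))) * card X)
        = int (card (X+C+D)) * int (card X) + int (card (X+C)) * int (card X) - int (card (Z+C)) * int (card X)"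
      by (simp only: of_nat_mult of_nat_add of_nat_diff[OF zc]) (simp add: algebra_simps)
    also have "\<dots> \<le> int (card (X+C)) * int (card (X+D)) + int (card (X+C)) * int (card X) - int (card (X+C)) * int (card Z')"
      using i1 i2 i3 by linarith
    also have "\<dots> = int (card (X+C) * (card (X+D) + (card X - card Z')))"
      by (simp only: of_nat_mult of_nat_add of_nat_diff[OF zx(1)]) (simp add: algebra_simps)
    finally show ?thesis by linarith
  qed
  also have "\<dots> = card (X+C) * card (X + insert d D)" using c2 by simp
  finally show ?thesis .
qed

lemma petridis:
  fixes X C D :: "'a::ab_group_add set"
  assumes fX: "finite X" and fC: "finite C" and fD: "finite D"
  and min: "\<And>Z. Z \<subseteq> X \<Longrightarrow> card (X+C) * card Z \<le> card (Z+C) * card X"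
  shows "card (X+C+D) * card X \<le> card (X+C) * card (X+D)"
  using fD
proof (induction D rule: finite_induct)
  case empty thus ?case by simp
next
  case (insert d D)
  show ?case by (rule petridis_step[OF fX fC insert(1) min insert(3)])
qed

lemma petridis_exists:
  fixes A C :: "'a::ab_group_add set"
  assumes fA: "finite A" and ne: "A \<noteq> {}" and fC: "finite C"
  shows "\<exists>X. X \<subseteq> A \<and> X \<noteq> {} \<and> card (X+C) * card A \<le> card (A+C) * card X \<and>
     (\<forall>D. finite D \<longrightarrow> card (X+C+D) * card X \<le> card (X+C) * card (X+D))"
proof -
  define P where "P = {Z. Z \<subseteq> A \<and> Z \<noteq> {}}"
  define f where "f Z = real (card (Z+C)) / real (card Z)" for Z
  have fP: "finite P" using fA by (simp add: P_def)
  have AP: "A \<in> P" using ne by (simp add: P_def)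
  obtain X where XP: "X \<in> P" and Xmin: "\<And>Z. Z \<in> P \<Longrightarrow> f X \<le> f Z"
  proof -
    have "finite (f ` P)" "f ` P \<noteq> {}" using fP AP by auto
    then have "Min (f ` P) \<in> f ` P" by (rule Min_in)
    then obtain X where "X \<in> P" "f X = Min (f ` P)" by auto
    moreover have "\<And>Z. Z \<in> P \<Longrightarrow> Min (f ` P) \<le> f Z" using fP by auto
    ultimately show ?thesis using that by metis
  qed
  have XA: "X \<subseteq> A" and Xne: "X \<noteq> {}" using XP by (auto simp: P_def)
  have fX: "finite X" using XA fA finite_subset by blast
  have cX: "card X > 0" using fX Xne by (simp add: card_gt_0_iff)
  have cross: "card (X+C) * card Z \<le> card (Z+C) * card X" if "Z \<in> P" for Z
  proof -
    have "finite Z" "Z \<noteq> {}" using that fA finite_subset by (auto simp: P_def)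
    then have cZ: "card Z > 0" by (simp add: card_gt_0_iff)
    have "real (card (X+C)) / real (card X) \<le> real (card (Z+C)) / real (card Z)"
      using Xmin[OF that] by (simp add: f_def)
    then have "real (card (X+C)) * real (card Z) \<le> real (card (Z+C)) * real (card X)"
      using cX cZ by (simp add: divide_simps)
    thus ?thesis by (metis of_nat_le_iff of_nat_mult)
  qed
  have min: "card (X+C) * card Z \<le> card (Z+C) * card X" if "Z \<subseteq> X" for Z
  proof (cases "Z = {}")
    case True thus ?thesis by simp
  next
    case False thus ?thesis using that XA by (intro cross) (auto simp: P_def)
  qed
  show ?thesis
    using XA Xne cross[OF AP] petridis[OF fX fC _ min] by blast
qed

lemma sing_plus_sing: "{a::'a::plus} + {b} = {a + b}"
  by (auto simp: set_plus_def)

lemma shiftU: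
  fixes X U :: "'a::ab_group_add set"
  assumes "x0 \<in> X"
  shows "U \<subseteq> X + U + {- x0}"
proof
  fix u assume "u \<in> U"
  have "(x0 + u) + (- x0) \<in> X + U + {- x0}" using assms \<open>u\<in>U\<close> by (intro set_plus_intro) auto
  thus "u \<in> X + U + {- x0}" by simp
qed

lemma card_shift:
  fixes X :: "'a::ab_group_add set"
  shows "card (X + {t}) = card X" by (rule card_plus_sing)

lemma fin_plus [simp, intro]: "finite A \<Longrightarrow> finite B \<Longrightarrow> finite (A + B)"
  by (rule finite_set_plus)

lemma ne_plus [simp]: "A \<noteq> {} \<Longrightarrow> B \<noteq> {} \<Longrightarrow> A + B \<noteq> {}"
  by (auto simp: set_plus_def)

lemma card_mono_plus:
  fixes A B C D :: "'a::ab_group_add set"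
  assumes "A \<subseteq> C" "B \<subseteq> D" "finite C" "finite D"
  shows "card (A + B) \<le> card (C + D)"
  using assms by (intro card_mono set_plus_mono2) auto

lemma inf_pow_bound:
  fixes S :: "real set"
  assumes "S \<noteq> {}" "\<And>r. r \<in> S \<Longrightarrow> 0 \<le> r" "0 \<le> z" "\<And>r. r \<in> S \<Longrightarrow> z \<le> r ^ n" "n > 0"
  shows "z \<le> (Inf S) ^ n"
proof -
  have "root n z \<le> Inf S"
  proof (rule cInf_greatest[OF assms(1)])
    fix r assume r: "r \<in> S"
    have "root n z \<le> root n (r ^ n)" using assms(4)[OF r] assms(5) by simp
    also have "\<dots> = r" using real_root_power_cancel[OF assms(5) assms(2)[OF r]] .
    finally show "root n z \<le> r" .
  qed
  then have "root n z ^ n \<le> (Inf S) ^ n"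
    by (intro power_mono) (auto intro: real_root_ge_zero assms(3))
  thus ?thesis using assms(3,5) by simp
qed

lemma sqrt_ratio_le:
  fixes s S a b p q :: real
  assumes "0 \<le> s" "0 \<le> S" "0 < a" "0 < b" "0 < p" "0 < q" "s * a \<le> S * p" "s * b \<le> S * q"
  shows "s / sqrt (p * q) \<le> S / sqrt (a * b)"
proof -
  have "(s * a) * (s * b) \<le> (S * p) * (S * q)"
    by (rule mult_mono) (use assms in auto)
  then have "sqrt ((s*s) * (a*b)) \<le> sqrt ((S*S) * (p*q))"
    by (simp add: algebra_simps)
  then have "s * sqrt (a*b) \<le> S * sqrt (p*q)"
    using assms by (simp add: real_sqrt_mult)
  thus ?thesis using assms by (simp add: divide_simps mult.commute)
qed

lemma bdd_nonneg: "(\<And>x. x \<in> S \<Longrightarrow> (0::real) \<le> x) \<Longrightarrow> bdd_below S"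
  by (rule bdd_belowI[of _ 0]) auto

lemma alpha_le:
  assumes "finite A" "finite B" "A \<noteq> {}" "B \<noteq> {}" "U \<subseteq> A" "U \<subseteq> B"
  shows "alpha U \<le> real (card (A + B)) / sqrt (real (card A) * real (card B))"
  unfolding alpha_def
  by (rule cInf_lower) (use assms in \<open>blast, auto intro!: bdd_nonneg\<close>)

lemma alpha_ge:
  assumes "finite U" "U \<noteq> {}"
  and "\<And>A B. finite A \<Longrightarrow> finite B \<Longrightarrow> A \<noteq> {} \<Longrightarrow> B \<noteq> {} \<Longrightarrow> U \<subseteq> A \<Longrightarrow> U \<subseteq> B \<Longrightarrow>
     c \<le> real (card (A + B)) / sqrt (real (card A) * real (card B))"
  shows "c \<le> alpha U"
  unfolding alpha_def
  apply (rule cInf_greatest)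
  subgoal using assms(1,2) by blast
  subgoal using assms(3) by blast
  done

lemma alpha_nonneg: "finite U \<Longrightarrow> U \<noteq> {} \<Longrightarrow> 0 \<le> alpha U"
  by (rule alpha_ge) auto

lemma alpha'_le:
  assumes "finite A" "finite B" "A \<noteq> {}" "B \<noteq> {}" "U \<subseteq> A" "U \<subseteq> B" "card A = card B"
  shows "alpha' U \<le> real (card (A + B)) / real (card A)"
  unfolding alpha'_def
  by (rule cInf_lower) (use assms in \<open>blast, auto intro!: bdd_nonneg\<close>)

lemma alpha'_ge:
  assumes "finite U" "U \<noteq> {}"
  and "\<And>A B. finite A \<Longrightarrow> finite B \<Longrightarrow> A \<noteq> {} \<Longrightarrow> B \<noteq> {} \<Longrightarrow> U \<subseteq> A \<Longrightarrow> U \<subseteq> B \<Longrightarrow> card A = card B \<Longrightarrow>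
     c \<le> real (card (A + B)) / real (card A)"
  shows "c \<le> alpha' U"
  unfolding alpha'_def
  apply (rule cInf_greatest)
  subgoal using assms(1,2) by blast
  subgoal using assms(3) by blast
  done

lemma alpha''_le:
  assumes "finite A" "A \<noteq> {}" "U \<subseteq> A"
  shows "alpha'' U \<le> real (card (A + A)) / real (card A)"
  unfolding alpha''_def
  by (rule cInf_lower) (use assms in \<open>blast, auto intro!: bdd_nonneg\<close>)

lemma alpha''_ge:
  assumes "finite U" "U \<noteq> {}"
  and "\<And>A. finite A \<Longrightarrow> A \<noteq> {} \<Longrightarrow> U \<subseteq> A \<Longrightarrow> c \<le> real (card (A + A)) / real (card A)"
  shows "c \<le> alpha'' U"
  unfolding alpha''_def
  apply (rule cInf_greatest)
  subgoal using assms(1,2) by blast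
  subgoal using assms(3) by blast
  done

lemma beta_le:
  assumes "finite A" "finite B" "A \<noteq> {}" "B \<noteq> {}"
  shows "beta U \<le> real (card (A + B + U)) / sqrt (real (card A) * real (card B))"
  unfolding beta_def
  by (rule cInf_lower) (use assms in \<open>blast, auto intro!: bdd_nonneg\<close>)

lemma beta_ge:
  assumes "\<And>A B. finite A \<Longrightarrow> finite B \<Longrightarrow> A \<noteq> {} \<Longrightarrow> B \<noteq> {} \<Longrightarrow>
     c \<le> real (card (A + B + U)) / sqrt (real (card A) * real (card B))"
  shows "c \<le> beta U"
  unfolding beta_def
  apply (rule cInf_greatest)
  subgoal by blast
  subgoal using assms by blast
  done

lemma beta_nonneg: "0 \<le> beta U"
  by (rule beta_ge) auto

lemma beta'_ge:
  assumes "\<And>A B. finite A \<Longrightarrow> finite B \<Longrightarrow> A \<noteq> {} \<Longrightarrow> B \<noteq> {} \<Longrightarrow> card A = card B \<Longrightarrow>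
     c \<le> real (card (A + B + U)) / sqrt (real (card A) * real (card B))"
  shows "c \<le> beta' U"
  unfolding beta'_def
  apply (rule cInf_greatest)
  subgoal by blast
  subgoal using assms by blast
  done

lemma beta'_nonneg: "0 \<le> beta' U"
  by (rule beta'_ge) auto

lemma beta''_le:
  assumes "finite A" "A \<noteq> {}"
  shows "beta'' U \<le> real (card (A + A + U)) / real (card A)"
  unfolding beta''_def
  by (rule cInf_lower) (use assms in \<open>blast, auto intro!: bdd_nonneg\<close>)

lemma beta''_ge:
  assumes "\<And>A. finite A \<Longrightarrow> A \<noteq> {} \<Longrightarrow> c \<le> real (card (A + A + U)) / real (card A)"
  shows "c \<le> beta'' U"
  unfolding beta''_def
  apply (rule cInf_greatest)
  subgoal by blast
  subgoal using assms by blast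
  done

lemma beta''_nonneg: "0 \<le> beta'' U"
  by (rule beta''_ge) auto

lemma key1:
  fixes s m S n a b p q x y :: real
  assumes "0 \<le> s" "0 \<le> m" "0 \<le> S" "0 \<le> n" "0 < a" "0 < b" "0 \<le> p" "0 \<le> q" "0 < x" "0 < y" "x \<le> a"
    "s*x \<le> m*p" "m*a \<le> S*x" "s*y \<le> n*q" "n*b \<le> m*y"
  shows "s*a \<le> S*p" "s*b \<le> S*q"
proof -
  have "s*a*x \<le> m*p*a" using mult_right_mono[OF assms(12), of a] assms by (simp add: algebra_simps)
  also have "\<dots> = (m*a)*p" by simp
  also have "\<dots> \<le> (S*x)*p" using mult_right_mono[OF assms(13), of p] assms by simp
  finally have "(s*a)*x \<le> (S*p)*x" by (simp add: algebra_simps)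
  thus "s*a \<le> S*p" using assms(9) by simp
  have "s*b*y \<le> n*q*b" using mult_right_mono[OF assms(14), of b] assms by (simp add: algebra_simps)
  also have "\<dots> = (n*b)*q" by simp
  also have "\<dots> \<le> (m*y)*q" using mult_right_mono[OF assms(15), of q] assms by simp
  finally have "(s*b)*y \<le> (m*q)*y" by (simp add: algebra_simps)
  then have sb: "s*b \<le> m*q" using assms(10) by simp
  have "m*a \<le> S*a" using assms(13) mult_left_mono[OF assms(11) assms(3)] by linarith
  then have "m \<le> S" using assms(5) by simp
  then have "m*q \<le> S*q" using assms(8) by (simp add: mult_right_mono)
  thus "s*b \<le> S*q" using sb by linarith
qed

lemma double_petridis:
  fixes A B U :: "'a::ab_group_add set"
  assumes "finite A" "finite B" "finite U" "A \<noteq> {}" "B \<noteq> {}"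
  shows "\<exists>X Y. X \<subseteq> A \<and> Y \<subseteq> B \<and> X \<noteq> {} \<and> Y \<noteq> {} \<and>
    card (X+Y+U+U) * card X \<le> card (X+B+U) * card (X+U) \<and>
    card (X+B+U) * card A \<le> card (A+B+U) * card X \<and>
    card (X+Y+U+U) * card Y \<le> card (X+Y+U) * card (Y+U) \<and>
    card (X+Y+U) * card B \<le> card (X+B+U) * card Y"
proof -
  obtain X where X: "X \<subseteq> A" "X \<noteq> {}" "card (X+(B+U)) * card A \<le> card (A+(B+U)) * card X"
    "\<And>D. finite D \<Longrightarrow> card (X+(B+U)+D) * card X \<le> card (X+(B+U)) * card (X+D)"
    using petridis_exists[OF assms(1) assms(4), of "B+U"] assms by auto
  have fX: "finite X" using X(1) assms(1) finite_subset by blast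
  obtain Y where Y: "Y \<subseteq> B" "Y \<noteq> {}" "card (Y+(X+U)) * card B \<le> card (B+(X+U)) * card Y"
    "\<And>D. finite D \<Longrightarrow> card (Y+(X+U)+D) * card Y \<le> card (Y+(X+U)) * card (Y+D)"
    using petridis_exists[OF assms(2) assms(5), of "X+U"] assms fX by auto
  have fY: "finite Y" using Y(1) assms(2) finite_subset by blast
  have e1: "X+(B+U) = X+B+U" "A+(B+U) = A+B+U" "Y+(X+U) = X+Y+U" "B+(X+U) = X+B+U"
    "Y+(X+U)+U = X+Y+U+U" by (simp_all add: add_ac)
  have m: "card (X+Y+U+U) \<le> card (X+(B+U)+U)"
  proof (rule card_mono)
    show "finite (X+(B+U)+U)" using fX assms by simp
    show "X+Y+U+U \<subseteq> X+(B+U)+U" using Y(1) by (simp add: add.assoc) (intro set_plus_mono2, auto)+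
  qed
  have "card (X+Y+U+U) * card X \<le> card (X+B+U) * card (X+U)"
    using X(4)[OF assms(3)] m e1 by (metis (no_types, lifting) le_trans mult_le_mono1)
  moreover have "card (X+Y+U+U) * card Y \<le> card (X+Y+U) * card (Y+U)"
    using Y(4)[OF assms(3)] e1 by simp
  ultimately show ?thesis using X Y e1 by (intro exI[of _ X] exI[of _ Y]) auto
qed

lemma part1:
  fixes U :: "'a::ab_group_add set"
  assumes fU: "finite U" and neU: "U \<noteq> {}"
  shows "alpha U \<le> beta U"
proof (rule beta_ge)
  fix A B :: "'a set"
  assume fA: "finite A" and fB: "finite B" and neA: "A \<noteq> {}" and neB: "B \<noteq> {}"
  obtain X Y where XY: "X \<subseteq> A" "Y \<subseteq> B" "X \<noteq> {}" "Y \<noteq> {}"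
    "card (X+Y+U+U) * card X \<le> card (X+B+U) * card (X+U)"
    "card (X+B+U) * card A \<le> card (A+B+U) * card X"
    "card (X+Y+U+U) * card Y \<le> card (X+Y+U) * card (Y+U)"
    "card (X+Y+U) * card B \<le> card (X+B+U) * card Y"
    using double_petridis[OF fA fB fU neA neB] by blast
  have fX: "finite X" and fY: "finite Y" using XY fA fB finite_subset by auto
  obtain x0 y0 where x0: "x0 \<in> X" and y0: "y0 \<in> Y" using XY by blast
  define X' where "X' = X + U + {-x0}"
  define Y' where "Y' = Y + U + {-y0}"
  have UX': "U \<subseteq> X'" using shiftU[OF x0] by (simp add: X'_def)
  have UY': "U \<subseteq> Y'" using shiftU[OF y0] by (simp add: Y'_def)
  have fX': "finite X'" "finite Y'" using fX fY fU by (simp_all add: X'_def Y'_def)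
  have neX': "X' \<noteq> {}" "Y' \<noteq> {}" using UX' UY' neU by auto
  have "X' + Y' = (X+Y+U+U) + ({-x0} + {-y0})" by (simp add: X'_def Y'_def add_ac)
  then have cs: "card (X' + Y') = card (X+Y+U+U)" by (simp add: sing_plus_sing card_plus_sing)
  have cX': "card X' = card (X+U)" by (simp add: X'_def card_plus_sing)
  have cY': "card Y' = card (Y+U)" by (simp add: Y'_def card_plus_sing)
  have "alpha U \<le> real (card (X'+Y')) / sqrt (real (card X') * real (card Y'))"
    by (rule alpha_le) (use fX' neX' UX' UY' in auto)
  also have "\<dots> = real (card (X+Y+U+U)) / sqrt (real (card (X+U)) * real (card (Y+U)))"
    using cs cX' cY' by simp
  also have "\<dots> \<le> real (card (A+B+U)) / sqrt (real (card A) * real (card B))"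
  proof -
    have pos: "0 < card X" "0 < card Y" "0 < card A" "0 < card B" "0 < card (X+U)" "0 < card (Y+U)"
      using fX fY fA fB fU XY neA neB neU by (auto simp: card_gt_0_iff)
    have xa: "card X \<le> card A" using XY fA card_mono by blast
    note k = key1[of "real (card (X+Y+U+U))" "real (card (X+B+U))" "real (card (A+B+U))"
        "real (card (X+Y+U))" "real (card A)" "real (card B)" "real (card (X+U))" "real (card (Y+U))"
        "real (card X)" "real (card Y)"]
    have h: "real (card (X+Y+U+U)) * real (card A) \<le> real (card (A+B+U)) * real (card (X+U))"
          "real (card (X+Y+U+U)) * real (card B) \<le> real (card (A+B+U)) * real (card (Y+U))"
      using k pos xa XY(5-8) by (simp_all add: of_nat_mult[symmetric] del: of_nat_mult)
    show ?thesis by (rule sqrt_ratio_le) (use h pos in auto)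
  qed
  finally show "alpha U \<le> real (card (A+B+U)) / sqrt (real (card A) * real (card B))" .
qed

lemma construct:
  fixes U A B :: "'a::ab_group_add set"
  assumes fU: "finite U" and neU: "U \<noteq> {}" and fA: "finite A" and fB: "finite B"
    and neA: "A \<noteq> {}" and neB: "B \<noteq> {}"
  shows "\<exists>X' Y'. finite X' \<and> finite Y' \<and> U \<subseteq> X' \<and> U \<subseteq> Y' \<and>
    real (card (X'+Y')) * real (card A) \<le> real (card (A+B+U)) * real (card X') \<and>
    real (card (X'+Y')) * real (card B) \<le> real (card (A+B+U)) * real (card Y')"
proof -
  obtain X Y where XY: "X \<subseteq> A" "Y \<subseteq> B" "X \<noteq> {}" "Y \<noteq> {}"
    "card (X+Y+U+U) * card X \<le> card (X+B+U) * card (X+U)"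
    "card (X+B+U) * card A \<le> card (A+B+U) * card X"
    "card (X+Y+U+U) * card Y \<le> card (X+Y+U) * card (Y+U)"
    "card (X+Y+U) * card B \<le> card (X+B+U) * card Y"
    using double_petridis[OF fA fB fU neA neB] by blast
  have fX: "finite X" and fY: "finite Y" using XY fA fB finite_subset by auto
  obtain x0 y0 where x0: "x0 \<in> X" and y0: "y0 \<in> Y" using XY by blast
  define X' where "X' = X + U + {-x0}"
  define Y' where "Y' = Y + U + {-y0}"
  have UX': "U \<subseteq> X'" using shiftU[OF x0] by (simp add: X'_def)
  have UY': "U \<subseteq> Y'" using shiftU[OF y0] by (simp add: Y'_def)
  have fX': "finite X'" "finite Y'" using fX fY fU by (simp_all add: X'_def Y'_def)
  have "X' + Y' = (X+Y+U+U) + ({-x0} + {-y0})" by (simp add: X'_def Y'_def add_ac)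
  then have cs: "card (X' + Y') = card (X+Y+U+U)" by (simp add: sing_plus_sing card_plus_sing)
  have cX': "card X' = card (X+U)" by (simp add: X'_def card_plus_sing)
  have cY': "card Y' = card (Y+U)" by (simp add: Y'_def card_plus_sing)
  have pos: "0 < card X" "0 < card Y" "0 < card A" "0 < card B" "0 < card (X+U)" "0 < card (Y+U)"
    using fX fY fA fB fU XY neA neB neU by (auto simp: card_gt_0_iff)
  have xa: "card X \<le> card A" using XY fA card_mono by blast
  note k = key1[of "real (card (X+Y+U+U))" "real (card (X+B+U))" "real (card (A+B+U))"
      "real (card (X+Y+U))" "real (card A)" "real (card B)" "real (card (X+U))" "real (card (Y+U))"
      "real (card X)" "real (card Y)"]
  have h: "real (card (X+Y+U+U)) * real (card A) \<le> real (card (A+B+U)) * real (card (X+U))"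
        "real (card (X+Y+U+U)) * real (card B) \<le> real (card (A+B+U)) * real (card (Y+U))"
    using k pos xa XY(5-8) by (simp_all add: of_nat_mult[symmetric] del: of_nat_mult)
  show ?thesis using h cs cX' cY' fX' UX' UY' by (intro exI[of _ X'] exI[of _ Y']) simp
qed

lemma subset_card_between:
  assumes "finite W" "U \<subseteq> W" "card U \<le> k" "k \<le> card W"
  shows "\<exists>V. U \<subseteq> V \<and> V \<subseteq> W \<and> card V = k"
proof -
  have fU: "finite U" using assms finite_subset by blast
  have "k - card U \<le> card (W - U)" using assms fU by (simp add: card_Diff_subset)
  then obtain T where T: "T \<subseteq> W - U" "card T = k - card U" "finite T"
    by (rule obtain_subset_with_card_n)
  have "card (U \<union> T) = card U + card T" using T fU by (intro card_Un_disjoint) auto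
  thus ?thesis using T assms by (intro exI[of _ "U \<union> T"]) auto
qed

lemma part2:
  fixes U :: "'a::ab_group_add set"
  assumes fU: "finite U" and neU: "U \<noteq> {}"
  shows "alpha' U \<le> beta' U"
proof (rule beta'_ge)
  fix A B :: "'a set"
  assume fA: "finite A" and fB: "finite B" and neA: "A \<noteq> {}" and neB: "B \<noteq> {}" and ab: "card A = card B"
  obtain X' Y' where C: "finite X'" "finite Y'" "U \<subseteq> X'" "U \<subseteq> Y'"
    "real (card (X'+Y')) * real (card A) \<le> real (card (A+B+U)) * real (card X')"
    "real (card (X'+Y')) * real (card B) \<le> real (card (A+B+U)) * real (card Y')"
    using construct[OF fU neU fA fB neA neB] by blast
  have nA: "0 < card A" using fA neA by (simp add: card_gt_0_iff)
  have sq: "sqrt (real (card A) * real (card B)) = real (card A)" using ab by simp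
  have cU: "card U \<le> card X'" "card U \<le> card Y'" using C card_mono by auto
  have pX: "0 < card X'" "0 < card Y'" using cU fU neU C(1,2) by (auto simp: card_gt_0_iff)
  have goal: "alpha' U \<le> real (card (A+B+U)) / real (card A)"
  proof (cases "card X' \<le> card Y'")
    case True
    obtain V where V: "U \<subseteq> V" "V \<subseteq> Y'" "card V = card X'"
      using subset_card_between[OF C(2) C(4) cU(1) True] by blast
    have fV: "finite V" using V C finite_subset by blast
    have "alpha' U \<le> real (card (X'+V)) / real (card X')"
      by (rule alpha'_le) (use V fV C neU in auto)
    also have "\<dots> \<le> real (card (X'+Y')) / real (card X')"
      using card_mono_plus[of X' X' V Y'] V C pX by (simp add: divide_right_mono)
    also have "\<dots> \<le> real (card (A+B+U)) / real (card A)"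
      using C(5) nA pX by (simp add: divide_simps mult.commute)
    finally show ?thesis .
  next
    case False
    then have le: "card Y' \<le> card X'" by simp
    obtain V where V: "U \<subseteq> V" "V \<subseteq> X'" "card V = card Y'"
      using subset_card_between[OF C(1) C(3) cU(2) le] by blast
    have fV: "finite V" using V C finite_subset by blast
    have "alpha' U \<le> real (card (V+Y')) / real (card V)"
      by (rule alpha'_le) (use V fV C neU in auto)
    also have "\<dots> \<le> real (card (X'+Y')) / real (card Y')"
      using card_mono_plus[of V X' Y' Y'] V C pX by (simp add: divide_right_mono)
    also have "\<dots> \<le> real (card (A+B+U)) / real (card A)"
      using C(6) nA pX ab by (simp add: divide_simps mult.commute)
    finally show ?thesis .
  qed
  thus "alpha' U \<le> real (card (A+B+U)) / sqrt (real (card A) * real (card B))" using sq by simp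
qed

lemma alpha_pow:
  assumes "finite U" "U \<noteq> {}" "0 \<le> z" "0 < n"
  and "\<And>A B. finite A \<Longrightarrow> finite B \<Longrightarrow> A \<noteq> {} \<Longrightarrow> B \<noteq> {} \<Longrightarrow> U \<subseteq> A \<Longrightarrow> U \<subseteq> B \<Longrightarrow>
     z \<le> (real (card (A + B)) / sqrt (real (card A) * real (card B))) ^ n"
  shows "z \<le> (alpha U) ^ n"
  unfolding alpha_def
  apply (rule inf_pow_bound)
  subgoal using assms(1,2) by blast
  subgoal by auto
  subgoal using assms(3) .
  subgoal using assms(5) by blast
  subgoal using assms(4) .
  done

lemma beta_pow:
  assumes "0 \<le> z" "0 < n"
  and "\<And>A B. finite A \<Longrightarrow> finite B \<Longrightarrow> A \<noteq> {} \<Longrightarrow> B \<noteq> {} \<Longrightarrow>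
     z \<le> (real (card (A + B + U)) / sqrt (real (card A) * real (card B))) ^ n"
  shows "z \<le> (beta U) ^ n"
  unfolding beta_def
  apply (rule inf_pow_bound)
  subgoal by blast
  subgoal by auto
  subgoal using assms(1) .
  subgoal using assms(3) by blast
  subgoal using assms(2) .
  done

lemma keyA:
  fixes w t T x b :: real
  assumes "0 \<le> w" "0 \<le> t" "0 \<le> T" "0 < x" "0 < b" "w*x \<le> t*t" "t*b \<le> T*x"
  shows "w*b*b \<le> T*T*x"
proof -
  have "(w*b*b)*x = (w*x)*(b*b)" by simp
  also have "\<dots> \<le> (t*t)*(b*b)" using assms by (intro mult_right_mono) auto
  also have "\<dots> = (t*b)*(t*b)" by simp
  also have "\<dots> \<le> (T*x)*(T*x)" by (rule mult_mono) (use assms in auto)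
  also have "\<dots> = (T*T*x)*x" by simp
  finally show ?thesis using assms(4) by simp
qed

lemma part3:
  fixes U :: "'a::ab_group_add set"
  assumes fU: "finite U" and neU: "U \<noteq> {}"
  shows "alpha'' U \<le> beta'' U"
proof (rule beta''_ge)
  fix A :: "'a set" assume fA: "finite A" and neA: "A \<noteq> {}"
  obtain Z where Z: "Z \<subseteq> A" "Z \<noteq> {}" "card (Z+(A+U)) * card A \<le> card (A+(A+U)) * card Z"
    "\<And>D. finite D \<Longrightarrow> card (Z+(A+U)+D) * card Z \<le> card (Z+(A+U)) * card (Z+D)"
    using petridis_exists[OF fA neA, of "A+U"] fA fU by auto
  have fZ: "finite Z" using Z fA finite_subset by blast
  obtain z0 where z0: "z0 \<in> Z" using Z by blast
  define X where "X = Z + U + {-z0}"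
  have UX: "U \<subseteq> X" using shiftU[OF z0] by (simp add: X_def)
  have fX: "finite X" using fZ fU by (simp add: X_def)
  have "X + X = (Z+Z+U+U) + ({-z0} + {-z0})" by (simp add: X_def add_ac)
  then have cs: "card (X + X) = card (Z+Z+U+U)" by (simp add: sing_plus_sing card_plus_sing)
  have cX: "card X = card (Z+U)" by (simp add: X_def card_plus_sing)
  have sub: "card (Z+Z+U+U) \<le> card (Z+(A+U)+U)"
  proof (rule card_mono)
    show "finite (Z+(A+U)+U)" using fZ fA fU by simp
    have "Z+Z+U+U = Z+(Z+U)+U" by (simp add: add_ac)
    also have "\<dots> \<subseteq> Z+(A+U)+U" using Z(1) by (intro set_plus_mono2) auto
    finally show "Z+Z+U+U \<subseteq> Z+(A+U)+U" .
  qed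
  have pos: "0 < card Z" "0 < card A" "0 < card (Z+U)"
    using fZ fA fU Z neA neU by (auto simp: card_gt_0_iff)
  have "alpha'' U \<le> real (card (X+X)) / real (card X)"
    by (rule alpha''_le) (use fX UX neU in auto)
  also have "\<dots> \<le> real (card (Z+(A+U)+U)) / real (card (Z+U))"
    using cs cX sub pos by (simp add: divide_right_mono)
  also have "\<dots> \<le> real (card (Z+(A+U))) / real (card Z)"
    using Z(4)[OF fU] pos by (simp add: divide_simps mult.commute of_nat_mult[symmetric] del: of_nat_mult)
  also have "\<dots> \<le> real (card (A+(A+U))) / real (card A)"
    using Z(3) pos by (simp add: divide_simps mult.commute of_nat_mult[symmetric] del: of_nat_mult)
  also have "A+(A+U) = A+A+U" by (simp add: add_ac)
  finally show "alpha'' U \<le> real (card (A+A+U)) / real (card A)" .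
qed

lemma part7:
  fixes U :: "'a::ab_group_add set"
  assumes fU: "finite U" and neU: "U \<noteq> {}"
  shows "beta'' U \<le> beta'' (U + U)"
proof (rule beta''_ge)
  fix A :: "'a set" assume fA: "finite A" and neA: "A \<noteq> {}"
  obtain u where u: "u \<in> U" using neU by blast
  have "card (A+A+U) \<le> card ((A+A+U) + U)" by (rule card_sumset_le_sing[OF fU _ u]) (use fA fU in simp)
  also have "(A+A+U) + U = A+A+(U+U)" by (simp add: add_ac)
  finally have c: "card (A+A+U) \<le> card (A+A+(U+U))" .
  have "beta'' U \<le> real (card (A+A+U)) / real (card A)" by (rule beta''_le[OF fA neA])
  also have "\<dots> \<le> real (card (A+A+(U+U))) / real (card A)" using c by (simp add: divide_right_mono)
  finally show "beta'' U \<le> real (card (A+A+(U+U))) / real (card A)" .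
qed

lemma keyB:
  fixes c T a b :: real
  assumes "c*b \<le> T*T" "0 < a" "0 < b"
  shows "c/a \<le> (T/sqrt(a*b))^2"
proof -
  have "(T/sqrt(a*b))^2 = T*T/(a*b)" using assms by (simp add: power_divide power2_eq_square)
  thus ?thesis using assms by (simp add: divide_simps mult.commute mult.left_commute)
qed

lemma keyC:
  fixes w t T x b :: real
  assumes "0 \<le> w" "0 \<le> t" "0 \<le> T" "0 < x" "0 < b" "w*x \<le> t*t" "t*b \<le> T*x" "x \<le> b"
  shows "w*b \<le> T*T"
proof -
  have "w*b*b \<le> T*T*x" by (rule keyA) (use assms in auto)
  also have "\<dots> \<le> T*T*b" using assms by (intro mult_left_mono) auto
  finally show ?thesis using assms(5) by simp
qed

lemma key4:
  fixes w t T x a b :: real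
  assumes "0 \<le> w" "0 \<le> t" "0 \<le> T" "0 < x" "0 < a" "0 < b" "a \<le> b" "x \<le> b"
    "w*x \<le> t*t" "t*b \<le> T*x"
  shows "w / sqrt (a*x) \<le> (T/sqrt(a*b))^2"
proof -
  have k: "w*b*b \<le> T*T*x" by (rule keyA) (use assms in auto)
  have ax: "a*x \<le> b*b" using assms by (intro mult_mono) auto
  have "(w*w*a*b*b)*x = (w*w*b*b)*(a*x)" by simp
  also have "\<dots> \<le> (w*w*b*b)*(b*b)" using ax assms by (intro mult_left_mono) auto
  also have "\<dots> = (w*b*b)*(w*b*b)" by simp
  also have "\<dots> \<le> (T*T*x)*(T*T*x)" by (rule mult_mono[OF k k]) (use assms in auto)
  also have "\<dots> = (T*T*T*T*x)*x" by simp
  finally have h: "w*w*a*b*b \<le> T*T*T*T*x" using assms(4) by simp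
  have rhs: "(T/sqrt(a*b))^2 = T*T/(a*b)" using assms by (simp add: power_divide power2_eq_square)
  have "(w / sqrt (a*x))^2 = w*w/(a*x)" using assms by (simp add: power_divide power2_eq_square)
  also have "\<dots> \<le> (T*T/(a*b))^2"
  proof -
    have "w*w*(a*a*b*b) = (w*w*a*b*b)*a" by simp
    also have "\<dots> \<le> (T*T*T*T*x)*a" using h assms by (intro mult_right_mono) auto
    also have "\<dots> = (T*T)*(T*T)*(a*x)" by simp
    finally show ?thesis using assms by (simp add: divide_simps power2_eq_square algebra_simps)
  qed
  finally have "(w / sqrt (a*x))^2 \<le> (T*T/(a*b))^2" .
  then have "w / sqrt (a*x) \<le> T*T/(a*b)"
    by (rule power2_le_imp_le) (use assms in auto)
  thus ?thesis using rhs by simp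
qed

lemma key5:
  fixes v w t T x a b :: real
  assumes "0 \<le> v" "0 \<le> w" "0 \<le> t" "0 \<le> T" "0 < x" "0 < a" "0 < b" "a \<le> b" "x \<le> b"
    "w*x \<le> t*t" "v*x \<le> t*w" "t*b \<le> T*x"
  shows "v / a \<le> (T/sqrt(a*b))^3"
proof -
  have "v*x*x \<le> t*w*x" using assms by (intro mult_right_mono) auto
  also have "\<dots> = t*(w*x)" by simp
  also have "\<dots> \<le> t*(t*t)" using assms by (intro mult_left_mono) auto
  finally have h1: "v*x*x \<le> t*t*t" by simp
  have "(v*b*b*b)*(x*x) = (v*x*x)*(b*b*b)" by simp
  also have "\<dots> \<le> (t*t*t)*(b*b*b)" using h1 assms by (intro mult_right_mono) auto
  also have "\<dots> = (t*b)*(t*b)*(t*b)" by simp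
  also have "\<dots> \<le> (T*x)*(T*x)*(T*x)"
  proof -
    have "(t*b)^3 \<le> (T*x)^3" by (rule power_mono) (use assms in auto)
    thus ?thesis by (simp add: power3_eq_cube)
  qed
  also have "\<dots> = (T*T*T*x)*(x*x)" by simp
  finally have h2: "v*b*b*b \<le> T*T*T*x" using assms(5) by simp
  have axx: "a*(x*x) \<le> b*(b*b)" using assms by (intro mult_mono) (auto intro: mult_mono)
  have "(v*v*a*b*b*b)*(x*x) = (v*v*b*b*b)*(a*(x*x))" by simp
  also have "\<dots> \<le> (v*v*b*b*b)*(b*(b*b))" using axx assms by (intro mult_left_mono) auto
  also have "\<dots> = (v*b*b*b)*(v*b*b*b)" by simp
  also have "\<dots> \<le> (T*T*T*x)*(T*T*T*x)" by (rule mult_mono[OF h2 h2]) (use assms in auto)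
  also have "\<dots> = (T*T*T*T*T*T)*(x*x)" by simp
  finally have h3: "v*v*a*b*b*b \<le> T*T*T*T*T*T" using assms(5) by simp
  define r where "r = T/sqrt(a*b)"
  have r0: "0 \<le> r" using assms by (simp add: r_def)
  have r2: "r*r = T*T/(a*b)" using assms by (simp add: r_def)
  have "(v/a)^2 = v*v/(a*a)" by (simp add: power2_eq_square)
  also have "\<dots> \<le> (r*r)*(r*r)*(r*r)"
  proof -
    have "v*v*(a*a*a*b*b*b) = (v*v*a*b*b*b)*(a*a)" by simp
    also have "\<dots> \<le> (T*T*T*T*T*T)*(a*a)" using h3 assms by (intro mult_right_mono) auto
    finally have "v*v*(a*a*a*b*b*b) \<le> (T*T*T*T*T*T)*(a*a)" .
    thus ?thesis unfolding r2 using assms by (simp add: divide_simps algebra_simps)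
  qed
  also have "\<dots> = (r^3)^2" by (simp add: power2_eq_square power3_eq_cube)
  finally have "(v/a)^2 \<le> (r^3)^2" .
  then have "v/a \<le> r^3" by (rule power2_le_imp_le) (use r0 in auto)
  thus ?thesis by (simp add: r_def)
qed

lemma nr: "(m::nat)*n \<le> p*q \<Longrightarrow> real m * real n \<le> real p * real q"
  by (metis of_nat_le_iff of_nat_mult)

lemma alpha''_nonneg: "finite U \<Longrightarrow> U \<noteq> {} \<Longrightarrow> 0 \<le> alpha'' U"
  by (rule alpha''_ge) auto

lemma plun:
  fixes A B :: "'a::ab_group_add set"
  assumes "finite A" "finite B" "A \<noteq> {}" "B \<noteq> {}"
  shows "\<exists>X. X \<subseteq> B \<and> X \<noteq> {} \<and> card (X+A) * card B \<le> card (A+B) * card X \<and>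
     card (X+A+A) * card X \<le> card (X+A) * card (X+A) \<and>
     card (X+A+(A+A)) * card X \<le> card (X+A) * card (X+A+A)"
proof -
  obtain X where X: "X \<subseteq> B" "X \<noteq> {}" "card (X+A) * card B \<le> card (B+A) * card X"
    "\<And>D. finite D \<Longrightarrow> card (X+A+D) * card X \<le> card (X+A) * card (X+D)"
    using petridis_exists[OF assms(2) assms(4) assms(1)] by blast
  have "card (X+A+(A+A)) * card X \<le> card (X+A) * card (X+(A+A))" using X(4) assms by simp
  moreover have "X+(A+A) = X+A+A" by (simp add: add_ac)
  moreover have "B+A = A+B" by (simp add: add_ac)
  ultimately show ?thesis using X X(4)[OF assms(1)] by (intro exI[of _ X]) auto
qed

lemma part6:
  fixes U :: "'a::ab_group_add set"
  assumes fU: "finite U" and neU: "U \<noteq> {}"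
  shows "alpha'' U \<le> (alpha U)\<^sup>2"
proof (rule alpha_pow[OF fU neU alpha''_nonneg[OF fU neU]])
  fix A B :: "'a set"
  assume fA: "finite A" and fB: "finite B" and neA: "A \<noteq> {}" and neB: "B \<noteq> {}" and UA: "U \<subseteq> A" and UB: "U \<subseteq> B"
  obtain X where X: "X \<subseteq> B" "X \<noteq> {}" "card (X+A) * card B \<le> card (A+B) * card X"
     "card (X+A+A) * card X \<le> card (X+A) * card (X+A)"
    using plun[OF fA fB neA neB] by blast
  have fX: "finite X" using X fB finite_subset by blast
  obtain x0 where x0: "x0 \<in> X" using X by blast
  have "card (A+A) \<le> card ((A+A)+X)" by (rule card_sumset_le_sing[OF fX _ x0]) (use fA in simp)
  also have "(A+A)+X = X+A+A" by (simp add: add_ac)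
  finally have c: "card (A+A) \<le> card (X+A+A)" .
  have pos: "0 < card X" "0 < card A" "0 < card B" using fX fA fB X neA neB by (auto simp: card_gt_0_iff)
  have xb: "card X \<le> card B" using X fB card_mono by blast
  have "real (card (X+A+A)) * real (card B) \<le> real (card (A+B)) * real (card (A+B))"
    by (rule keyC[where t = "real (card (X+A))" and x = "real (card X)"]) (use pos xb nr[OF X(3)] nr[OF X(4)] in auto)
  then have "real (card (A+A)) * real (card B) \<le> real (card (A+B)) * real (card (A+B))"
    using c pos by (meson mult_right_mono of_nat_0_le_iff of_nat_mono order_trans)
  then have "real (card (A+A)) / real (card A) \<le> (real (card (A+B)) / sqrt (real (card A) * real (card B)))^2"
    by (rule keyB) (use pos in auto)
  moreover have "alpha'' U \<le> real (card (A+A)) / real (card A)" by (rule alpha''_le) (use fA neA UA in auto)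
  ultimately show "alpha'' U \<le> (real (card (A+B)) / sqrt (real (card A) * real (card B)))^2" by linarith
qed simp

lemma part4core:
  fixes U A B :: "'a::ab_group_add set"
  assumes fU: "finite U" and fA: "finite A" and fB: "finite B" and neA: "A \<noteq> {}" and neB: "B \<noteq> {}"
    and UA: "U \<subseteq> A" and ab: "card A \<le> card B"
  shows "beta U \<le> (real (card (A+B)) / sqrt (real (card A) * real (card B)))^2"
proof -
  obtain X where X: "X \<subseteq> B" "X \<noteq> {}" "card (X+A) * card B \<le> card (A+B) * card X"
     "card (X+A+A) * card X \<le> card (X+A) * card (X+A)"
    using plun[OF fA fB neA neB] by blast
  have fX: "finite X" using X fB finite_subset by blast
  have c: "card (A+X+U) \<le> card (X+A+A)"
  proof (rule card_mono)
    show "finite (X+A+A)" using fX fA by simp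
    have "A+X+U = X+A+U" by (simp add: add_ac)
    also have "\<dots> \<subseteq> X+A+A" using UA by (intro set_plus_mono2) auto
    finally show "A+X+U \<subseteq> X+A+A" .
  qed
  have pos: "0 < card X" "0 < card A" "0 < card B" using fX fA fB X neA neB by (auto simp: card_gt_0_iff)
  have xb: "card X \<le> card B" using X fB card_mono by blast
  have "beta U \<le> real (card (A+X+U)) / sqrt (real (card A) * real (card X))"
    by (rule beta_le) (use fA fX neA X in auto)
  also have "\<dots> \<le> real (card (X+A+A)) / sqrt (real (card A) * real (card X))"
    using c pos by (simp add: divide_right_mono)
  also have "\<dots> \<le> (real (card (A+B)) / sqrt (real (card A) * real (card B)))^2"
    by (rule key4[where t = "real (card (X+A))"]) (use pos xb ab nr[OF X(3)] nr[OF X(4)] in auto)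
  finally show ?thesis .
qed

lemma part4:
  fixes U :: "'a::ab_group_add set"
  assumes fU: "finite U" and neU: "U \<noteq> {}"
  shows "beta U \<le> (alpha U)\<^sup>2"
proof (rule alpha_pow[OF fU neU beta_nonneg])
  fix A B :: "'a set"
  assume fA: "finite A" and fB: "finite B" and neA: "A \<noteq> {}" and neB: "B \<noteq> {}" and UA: "U \<subseteq> A" and UB: "U \<subseteq> B"
  show "beta U \<le> (real (card (A+B)) / sqrt (real (card A) * real (card B)))^2"
  proof (cases "card A \<le> card B")
    case True thus ?thesis using part4core[OF fU fA fB neA neB UA] by blast
  next
    case False
    then have "beta U \<le> (real (card (B+A)) / sqrt (real (card B) * real (card A)))^2"
      using part4core[OF fU fB fA neB neA UB] by simp
    thus ?thesis by (simp add: add.commute mult.commute)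
  qed
qed simp

lemma part5core:
  fixes U A B :: "'a::ab_group_add set"
  assumes fU: "finite U" and fA: "finite A" and fB: "finite B" and neA: "A \<noteq> {}" and neB: "B \<noteq> {}"
    and UA: "U \<subseteq> A" and ab: "card A \<le> card B"
  shows "beta'' U \<le> (real (card (A+B)) / sqrt (real (card A) * real (card B)))^3"
proof -
  obtain X where X: "X \<subseteq> B" "X \<noteq> {}" "card (X+A) * card B \<le> card (A+B) * card X"
     "card (X+A+A) * card X \<le> card (X+A) * card (X+A)"
     "card (X+A+(A+A)) * card X \<le> card (X+A) * card (X+A+A)"
    using plun[OF fA fB neA neB] by blast
  have fX: "finite X" using X fB finite_subset by blast
  obtain x0 where x0: "x0 \<in> X" using X by blast
  have "card (A+A+U) \<le> card (A+A+A)" using UA fA by (intro card_mono_plus) auto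
  also have "card (A+A+A) \<le> card ((A+A+A)+X)" by (rule card_sumset_le_sing[OF fX _ x0]) (use fA in simp)
  also have "(A+A+A)+X = X+A+(A+A)" by (simp add: add_ac)
  finally have c: "card (A+A+U) \<le> card (X+A+(A+A))" .
  have pos: "0 < card X" "0 < card A" "0 < card B" using fX fA fB X neA neB by (auto simp: card_gt_0_iff)
  have xb: "card X \<le> card B" using X fB card_mono by blast
  have "beta'' U \<le> real (card (A+A+U)) / real (card A)" by (rule beta''_le[OF fA neA])
  also have "\<dots> \<le> real (card (X+A+(A+A))) / real (card A)"
    using c pos by (simp add: divide_right_mono)
  also have "\<dots> \<le> (real (card (A+B)) / sqrt (real (card A) * real (card B)))^3"
    by (rule key5[where t = "real (card (X+A))" and w = "real (card (X+A+A))" and x = "real (card X)"])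
       (use pos xb ab nr[OF X(3)] nr[OF X(4)] nr[OF X(5)] in auto)
  finally show ?thesis .
qed

lemma part5:
  fixes U :: "'a::ab_group_add set"
  assumes fU: "finite U" and neU: "U \<noteq> {}"
  shows "beta'' U \<le> (alpha U)^3"
proof (rule alpha_pow[OF fU neU beta''_nonneg])
  fix A B :: "'a set"
  assume fA: "finite A" and fB: "finite B" and neA: "A \<noteq> {}" and neB: "B \<noteq> {}" and UA: "U \<subseteq> A" and UB: "U \<subseteq> B"
  show "beta'' U \<le> (real (card (A+B)) / sqrt (real (card A) * real (card B)))^3"
  proof (cases "card A \<le> card B")
    case True thus ?thesis using part5core[OF fU fA fB neA neB UA] by blast
  next
    case False
    then have "beta'' U \<le> (real (card (B+A)) / sqrt (real (card B) * real (card A)))^3"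
      using part5core[OF fU fB fA neB neA UB] by simp
    thus ?thesis by (simp add: add.commute mult.commute)
  qed
qed (simp)

lemma part8:
  fixes U :: "'a::ab_group_add set"
  assumes fU: "finite U" and neU: "U \<noteq> {}"
  shows "beta'' (U + U) \<le> (beta U)\<^sup>2"
proof (rule beta_pow[OF beta''_nonneg])
  fix A B :: "'a set"
  assume fA: "finite A" and fB: "finite B" and neA: "A \<noteq> {}" and neB: "B \<noteq> {}"
  obtain Z where Z: "Z \<subseteq> A" "Z \<noteq> {}" "card (Z+(B+U)) * card A \<le> card (A+(B+U)) * card Z"
    "\<And>D. finite D \<Longrightarrow> card (Z+(B+U)+D) * card Z \<le> card (Z+(B+U)) * card (Z+D)"
    using petridis_exists[OF fA neA, of "B+U"] fB fU by auto
  have fZ: "finite Z" using Z fA finite_subset by blast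
  obtain z0 where z0: "z0 \<in> Z" using Z by blast
  have w: "card (Z+(B+U)+(B+U)) * card Z \<le> card (Z+(B+U)) * card (Z+(B+U))"
    using Z(4)[of "B+U"] fB fU by simp
  have "card (B+B+(U+U)) \<le> card ((B+B+(U+U))+Z)" by (rule card_sumset_le_sing[OF fZ _ z0]) (use fB fU in simp)
  also have "(B+B+(U+U))+Z = Z+(B+U)+(B+U)" by (simp add: add_ac)
  finally have c: "card (B+B+(U+U)) \<le> card (Z+(B+U)+(B+U))" .
  have e: "A+(B+U) = A+B+U" by (simp add: add_ac)
  have pos: "0 < card Z" "0 < card A" "0 < card B" using fZ fA fB Z neA neB by (auto simp: card_gt_0_iff)
  have za: "card Z \<le> card A" using Z fA card_mono by blast
  have "real (card (Z+(B+U)+(B+U))) * real (card A) \<le> real (card (A+B+U)) * real (card (A+B+U))"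
    by (rule keyC[where t = "real (card (Z+(B+U)))" and x = "real (card Z)"])
       (use pos za nr[OF w] nr[OF Z(3)] e in auto)
  then have "real (card (B+B+(U+U))) * real (card A) \<le> real (card (A+B+U)) * real (card (A+B+U))"
    using c pos by (meson mult_right_mono of_nat_0_le_iff of_nat_mono order_trans)
  then have "real (card (B+B+(U+U))) / real (card B) \<le> (real (card (A+B+U)) / sqrt (real (card B) * real (card A)))^2"
    by (rule keyB) (use pos in auto)
  moreover have "beta'' (U+U) \<le> real (card (B+B+(U+U))) / real (card B)" by (rule beta''_le[OF fB neB])
  ultimately show "beta'' (U+U) \<le> (real (card (A+B+U)) / sqrt (real (card A) * real (card B)))^2"
    by (simp add: mult.commute)
qed simp

theorem mainTheorem16:
  fixes U :: "'a::ab_group_add set"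
  assumes "finite U" and "U \<noteq> {}"
  shows "alpha U \<le> beta U \<and>
    alpha' U \<le> 4 * beta' U \<and>
    alpha'' U \<le> 3 * beta'' U \<and>
    beta U \<le> (alpha U)\<^sup>2 \<and>
    beta'' U \<le> (alpha U)^3 \<and>
    alpha'' U \<le> (alpha U)\<^sup>2 \<and>
    beta'' U \<le> beta'' (U + U) \<and>
    beta'' (U + U) \<le> (beta U)\<^sup>2"
proof -
  have "alpha' U \<le> 4 * beta' U" using part2[OF assms] beta'_nonneg[of U] by linarith
  moreover have "alpha'' U \<le> 3 * beta'' U" using part3[OF assms] beta''_nonneg[of U] by linarith
  ultimately show ?thesis
    using part1[OF assms] part4[OF assms] part5[OF assms] part6[OF assms] part7[OF assms] part8[OF assms]
    by blast
qed

end
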